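(* Assume Setup (S). For every $n\ge 1$ and every $(\alpha_1,\dots,\alpha_{n+1})^T\in\mathbb{C}^{n+1}$ there exists $(\beta_1,\dots,\beta_{n+1})^T\in\mathbb{C}^{n+1}$ such that $R_n(\beta_1,\dots,\beta_{n+1})=\sum_{l=1}^{n+1}\alpha_l\,\chi_{B(l,n)}$.
   Context: Setup (S): Let $\mathfrak{A}=\varinjlim(\mathfrak{A}_n,\phi_n)$ be an AF C$^*$-algebra with $\mathfrak{A}_0=\mathbb{C}$, $\mathfrak{A}_n$ having exactly $n+1$ summands, $\phi_n$ unital injective $*$-homomorphisms with multiplicity matrices $\overline{A}_{n,n+1}\in M_{n+2,n+1}(\mathbb{N})$ ($(i,j)$ entry = multiplicity of summand $j$ of $\mathfrak{A}_n$ in summand $i$ of $\mathfrak{A}_{n+1}$), each of rank $n+1$. The Bratteli diagram has vertices $v(i,n)$, $1\le i\le n+1$, and $(\overline{A}_{n,n+1})_{ij}$ edges from $v(j,n)$ to $v(i,n+1)$. A minimal reduction is a subgraph with the same vertices, obtained by deleting edges only, in which for all $n\ge 0$ each vertex at level $n+1$ receives exactly one edge from level $n$ and each vertex at level $n$ emits at least one edge to level $n+1$. Fix a minimal reduction. Then for each $n\ge 1$ there are unique $1\le r'_n<r_n\le n+1$ and $1\le a_n\le n$ such that $v(r'_n,n)$ and $v(r_n,n)$ are the two vertices joined to $v(a_n,n-1)$, every other vertex of level $n-1$ being joined to exactly one vertex of level $n$; set $r_0=1$. $X_{min}$ is the set of infinite paths $(v(i_n,n))_{n\ge0}$, $i_0=1$,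 in the minimal reduction, with the topology having as clopen basis the nonempty sets $B(i,n)=\{\text{paths with }i_n=i\}$; it is a compact metrizable totally disconnected space. Define the linear map $R_n:\mathbb{C}^{n+1}\to C(X_{min},\mathbb{C})$ by $R_n(\alpha_1,\dots,\alpha_{n+1})=\sum_{l=0}^n\alpha_{l+1}\chi_{B(r_l,l)}$. *)

theory Defs
  imports "HOL-Analysis.Analysis"
begin

text \<open>Vertices v(i,n), 1 \<le> i \<le> n+1.
  A n i j = (A_{n,n+1})_{ij} = number of edges from v(j,n) to v(i,n+1) in the
  Bratteli diagram; e n i j = number of such edges kept in the minimal reduction.\<close>

definition bratteli_shape :: "(nat \<Rightarrow> nat \<Rightarrow> nat \<Rightarrow> nat) \<Rightarrow> bool" where
  "bratteli_shape A \<longleftrightarrow>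
     (\<forall>n i j. A n i j \<noteq> 0 \<longrightarrow> 1 \<le> i \<and> i \<le> n + 2 \<and> 1 \<le> j \<and> j \<le> n + 1)"

definition minimal_reduction ::
  "(nat \<Rightarrow> nat \<Rightarrow> nat \<Rightarrow> nat) \<Rightarrow> (nat \<Rightarrow> nat \<Rightarrow> nat \<Rightarrow> nat) \<Rightarrow> bool" where
  "minimal_reduction A e \<longleftrightarrow>
     (\<forall>n i j. e n i j \<le> A n i j) \<and>
     (\<forall>n. \<forall>i\<in>{1..n+2}. (\<Sum>j\<in>{1..n+1}. e n i j) = 1) \<and>
     (\<forall>n. \<forall>j\<in>{1..n+1}. (\<Sum>i\<in>{1..n+2}. e n i j) \<ge> 1)"

definition split_data :: "(nat \<Rightarrow> nat \<Rightarrow> nat \<Rightarrow> nat) \<Rightarrow> nat \<Rightarrow> nat \<Rightarrow> nat \<Rightarrow> nat \<Rightarrow> bool" where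
  "split_data e n r' r a \<longleftrightarrow>
     1 \<le> r' \<and> r' < r \<and> r \<le> n + 1 \<and> 1 \<le> a \<and> a \<le> n \<and>
     {i\<in>{1..n+1}. e (n - 1) i a \<noteq> 0} = {r', r} \<and>
     (\<forall>j\<in>{1..n}. j \<noteq> a \<longrightarrow> card {i\<in>{1..n+1}. e (n - 1) i j \<noteq> 0} = 1)"

definition r_seq :: "(nat \<Rightarrow> nat \<Rightarrow> nat \<Rightarrow> nat) \<Rightarrow> nat \<Rightarrow> nat" where
  "r_seq e n = (if n = 0 then 1 else (THE r. \<exists>r' a. split_data e n r' r a))"

text \<open>Infinite paths (v(i_n,n))_{n\<ge>0} with i_0 = 1 in the minimal reduction.\<close>
definition Xmin :: "(nat \<Rightarrow> nat \<Rightarrow> nat \<Rightarrow> nat) \<Rightarrow> (nat \<Rightarrow> nat) set" where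
  "Xmin e = {x. x 0 = 1 \<and> (\<forall>n. 1 \<le> x n \<and> x n \<le> n + 1 \<and> e n (x (Suc n)) (x n) \<noteq> 0)}"

definition Bset :: "(nat \<Rightarrow> nat \<Rightarrow> nat \<Rightarrow> nat) \<Rightarrow> nat \<Rightarrow> nat \<Rightarrow> (nat \<Rightarrow> nat) set" where
  "Bset e i n = {x\<in>Xmin e. x n = i}"

definition R_map :: "(nat \<Rightarrow> nat \<Rightarrow> nat \<Rightarrow> nat) \<Rightarrow> nat \<Rightarrow> (nat \<Rightarrow> complex) \<Rightarrow> (nat \<Rightarrow> nat) \<Rightarrow> complex" where
  "R_map e n \<alpha> = (\<lambda>x. \<Sum>l\<in>{0..n}. \<alpha> (l + 1) * indicator (Bset e (r_seq e l) l) x)"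

end

theory Submission
  imports Defs
begin

definition inV :: "(nat \<Rightarrow> nat \<Rightarrow> nat \<Rightarrow> nat) \<Rightarrow> nat \<Rightarrow> ((nat \<Rightarrow> nat) \<Rightarrow> complex) \<Rightarrow> bool" where
  "inV e n f \<longleftrightarrow> (\<exists>\<beta>. \<forall>x\<in>Xmin e. f x = R_map e n \<beta> x)"

lemma inV_add: "inV e n f \<Longrightarrow> inV e n g \<Longrightarrow> inV e n (\<lambda>x. f x + g x)"
proof -
  assume "inV e n f" "inV e n g"
  then obtain b1 b2 where b1: "\<forall>x\<in>Xmin e. f x = R_map e n b1 x"
    and b2: "\<forall>x\<in>Xmin e. g x = R_map e n b2 x" unfolding inV_def by blast
  have "\<forall>x\<in>Xmin e. f x + g x = R_map e n (\<lambda>k. b1 k + b2 k) x"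
    using b1 b2 by (simp add: R_map_def sum.distrib algebra_simps)
  then show ?thesis unfolding inV_def by blast
qed

lemma inV_scale: "inV e n f \<Longrightarrow> inV e n (\<lambda>x. c * f x)"
proof -
  assume "inV e n f"
  then obtain b1 where b1: "\<forall>x\<in>Xmin e. f x = R_map e n b1 x"
    unfolding inV_def by blast
  have "\<forall>x\<in>Xmin e. c * f x = R_map e n (\<lambda>k. c * b1 k) x"
  proof
    fix x assume "x \<in> Xmin e"
    then have "f x = R_map e n b1 x" using b1 by blast
    then show "c * f x = R_map e n (\<lambda>k. c * b1 k) x"
      unfolding R_map_def by (simp only: sum_distrib_left mult.assoc)
  qed
  then show ?thesis unfolding inV_def by blast
qed

lemma inV_zero: "inV e n (\<lambda>x. 0)"
  unfolding inV_def R_map_def by (rule exI[of _ "\<lambda>k. 0"]) simp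

lemma inV_cong: "inV e n f \<Longrightarrow> (\<And>x. x \<in> Xmin e \<Longrightarrow> g x = f x) \<Longrightarrow> inV e n g"
  unfolding inV_def by auto

lemma inV_sum: "finite S \<Longrightarrow> (\<And>l. l \<in> S \<Longrightarrow> inV e n (f l)) \<Longrightarrow> inV e n (\<lambda>x. \<Sum>l\<in>S. f l x)"
proof (induction S rule: finite_induct)
  case empty
  then show ?case using inV_zero by simp
next
  case (insert a F)
  then show ?case using inV_add[of e n "f a" "\<lambda>x. \<Sum>l\<in>F. f l x"] by simp
qed

lemma inV_mono: "inV e n f \<Longrightarrow> inV e (Suc n) f"
proof -
  assume "inV e n f"
  then obtain b1 where b1: "\<forall>x\<in>Xmin e. f x = R_map e n b1 x"
    unfolding inV_def by blast
  have "\<forall>x\<in>Xmin e. f x = R_map e (Suc n) (b1(n+2 := 0)) x"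
    using b1 by (simp add: R_map_def)
  then show ?thesis unfolding inV_def by blast
qed

lemma inV_r: "inV e n (indicator (Bset e (r_seq e n) n))"
proof -
  have "\<forall>x\<in>Xmin e. indicator (Bset e (r_seq e n) n) x = R_map e n (\<lambda>k. if k = n+1 then 1 else 0) x"
  proof
    fix x
    have "R_map e n (\<lambda>k. if k = n+1 then 1 else 0) x
       = (\<Sum>l\<in>{0..n}. if l = n then indicator (Bset e (r_seq e l) l) x else 0)"
      unfolding R_map_def by (rule sum.cong) auto
    also have "\<dots> = indicator (Bset e (r_seq e n) n) x"
      by (simp add: sum.delta)
    finally show "indicator (Bset e (r_seq e n) n) x = R_map e n (\<lambda>k. if k = n+1 then 1 else 0) x" by simp
  qed
  then show ?thesis unfolding inV_def by blast
qed

lemma edge_bounds: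
  assumes "bratteli_shape A" "minimal_reduction A e" "e m i j \<noteq> 0"
  shows "1 \<le> i \<and> i \<le> m + 2 \<and> 1 \<le> j \<and> j \<le> m + 1"
proof -
  have "e m i j \<le> A m i j" using assms(2) unfolding minimal_reduction_def by blast
  then have "A m i j \<noteq> 0" using assms(3) by linarith
  then show ?thesis using assms(1) unfolding bratteli_shape_def by blast
qed

lemma parent_unique:
  assumes "bratteli_shape A" "minimal_reduction A e" "e m i j \<noteq> 0" "e m i j' \<noteq> 0"
  shows "j = j'"
proof (rule ccontr)
  assume ne: "j \<noteq> j'"
  have b: "1 \<le> i \<and> i \<le> m + 2 \<and> 1 \<le> j \<and> j \<le> m + 1"
    using edge_bounds[OF assms(1,2,3)] .
  have b': "1 \<le> j' \<and> j' \<le> m + 1"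
    using edge_bounds[OF assms(1,2,4)] by blast
  have s: "(\<Sum>k\<in>{1..m+1}. e m i k) = 1"
    using assms(2) b unfolding minimal_reduction_def by auto
  have "(\<Sum>k\<in>{j,j'}. e m i k) \<le> (\<Sum>k\<in>{1..m+1}. e m i k)"
    by (rule sum_mono2) (use b b' in auto)
  moreover have "(\<Sum>k\<in>{j,j'}. e m i k) = e m i j + e m i j'" using ne by simp
  ultimately show False using s assms(3,4) by linarith
qed

lemma parent_exists:
  assumes "minimal_reduction A e" "i \<in> {1..m+2}"
  shows "\<exists>j\<in>{1..m+1}. e m i j \<noteq> 0"
proof (rule ccontr)
  assume "\<not> ?thesis"
  then have "(\<Sum>k\<in>{1..m+1}. e m i k) = 0" by simp
  moreover have "(\<Sum>k\<in>{1..m+1}. e m i k) = 1"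
    using assms unfolding minimal_reduction_def by blast
  ultimately show False by simp
qed

lemma child_exists:
  assumes "minimal_reduction A e" "j \<in> {1..m+1}"
  shows "\<exists>i\<in>{1..m+2}. e m i j \<noteq> 0"
proof (rule ccontr)
  assume "\<not> ?thesis"
  then have "(\<Sum>k\<in>{1..m+2}. e m k j) = 0" by simp
  moreover have "(\<Sum>k\<in>{1..m+2}. e m k j) \<ge> 1"
    using assms unfolding minimal_reduction_def by blast
  ultimately show False by simp
qed

lemma count_lemma:
  fixes f :: "nat \<Rightarrow> nat"
  assumes "finite S" "\<forall>j\<in>S. f j \<ge> 1" "(\<Sum>j\<in>S. f j) = card S + 1"
  shows "\<exists>a\<in>S. f a = 2 \<and> (\<forall>j\<in>S. j \<noteq> a \<longrightarrow> f j = 1)"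
proof -
  define g where "g j = f j - 1" for j
  have "(\<Sum>j\<in>S. f j) = (\<Sum>j\<in>S. g j + 1)"
    using assms(2) by (intro sum.cong) (auto simp: g_def)
  also have "\<dots> = (\<Sum>j\<in>S. g j) + (\<Sum>j\<in>S. 1)" by (rule sum.distrib)
  also have "\<dots> = (\<Sum>j\<in>S. g j) + card S" by simp
  finally have sg: "(\<Sum>j\<in>S. g j) = 1" using assms(3) by simp
  have "\<exists>a\<in>S. g a \<noteq> 0"
  proof (rule ccontr)
    assume "\<not> (\<exists>a\<in>S. g a \<noteq> 0)"
    then have "(\<Sum>j\<in>S. g j) = 0" by simp
    then show False using sg by simp
  qed
  then obtain a where a: "a \<in> S" "g a \<noteq> 0" by blast
  have "g a \<le> 1" using member_le_sum[of a S g] a assms(1) sg by simp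
  then have ga: "g a = 1" using a by simp
  have "\<forall>j\<in>S. j \<noteq> a \<longrightarrow> g j = 0"
  proof (intro ballI impI)
    fix j assume j: "j \<in> S" "j \<noteq> a"
    have "(\<Sum>k\<in>{a,j}. g k) \<le> (\<Sum>k\<in>S. g k)"
      by (rule sum_mono2) (use assms(1) a j in auto)
    then show "g j = 0" using j ga sg by simp
  qed
  then have "\<forall>j\<in>S. j \<noteq> a \<longrightarrow> f j = 1" using assms(2) unfolding g_def by force
  moreover have "f a = 2" using ga a assms(2) unfolding g_def by force
  ultimately show ?thesis using a by blast
qed


lemma split_exists:
  assumes sh: "bratteli_shape A" and mr: "minimal_reduction A e"
  shows "\<exists>r' r a. split_data e (Suc m) r' r a"
proof -
  define C where "C j = {i\<in>{1..Suc m + 1}. e m i j \<noteq> 0}" for j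
  have finC: "finite (C j)" for j unfolding C_def by simp
  have disj: "\<forall>j\<in>{1..m+1}. \<forall>k\<in>{1..m+1}. j \<noteq> k \<longrightarrow> C j \<inter> C k = {}"
    unfolding C_def using parent_unique[OF sh mr] by blast
  have un: "(\<Union>j\<in>{1..m+1}. C j) = {1..m+2}"
  proof
    show "(\<Union>j\<in>{1..m+1}. C j) \<subseteq> {1..m+2}" unfolding C_def by auto
    show "{1..m+2} \<subseteq> (\<Union>j\<in>{1..m+1}. C j)"
    proof
      fix i assume i: "i \<in> {1..m+2}"
      then obtain j where "j \<in> {1..m+1}" "e m i j \<noteq> 0" using parent_exists[OF mr] by blast
      then show "i \<in> (\<Union>j\<in>{1..m+1}. C j)" using i unfolding C_def by auto
    qed
  qed
  have "card (\<Union>j\<in>{1..m+1}. C j) = (\<Sum>j\<in>{1..m+1}. card (C j))"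
    by (rule card_UN_disjoint) (use finC disj in auto)
  then have sumc: "(\<Sum>j\<in>{1..m+1}. card (C j)) = card {1..m+1} + 1" using un by simp
  have ge1: "\<forall>j\<in>{1..m+1}. card (C j) \<ge> 1"
  proof
    fix j assume "j \<in> {1..m+1}"
    then obtain i where "i \<in> {1..m+2}" "e m i j \<noteq> 0" using child_exists[OF mr] by blast
    then have "C j \<noteq> {}" unfolding C_def by auto
    then show "card (C j) \<ge> 1" using finC[of j] by (simp add: Suc_le_eq card_gt_0_iff)
  qed
  obtain a where a: "a \<in> {1..m+1}" "card (C a) = 2"
    and oth: "\<forall>j\<in>{1..m+1}. j \<noteq> a \<longrightarrow> card (C j) = 1"
    using count_lemma[OF _ ge1 sumc] by auto
  obtain p q where pq: "C a = {p, q}" "p \<noteq> q" using a(2) card_2_iff by metis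
  define r' where "r' = min p q"
  define r where "r = max p q"
  have rr: "{r', r} = C a" "r' < r" using pq unfolding r'_def r_def by (auto simp: min_def max_def)
  have "r' \<in> C a" "r \<in> C a" using rr by auto
  then have "1 \<le> r'" "r \<le> Suc m + 1" unfolding C_def by auto
  then have "split_data e (Suc m) r' r a"
    unfolding split_data_def using rr a oth unfolding C_def by auto
  then show ?thesis by blast
qed

lemma split_unique:
  assumes "split_data e n r1' r1 a1" "split_data e n r2' r2 a2"
  shows "r1 = r2"
proof -
  have "a1 = a2"
  proof (rule ccontr)
    assume ne: "a1 \<noteq> a2"
    have "a2 \<in> {1..n}" using assms(2) unfolding split_data_def by auto
    then have "card {i\<in>{1..n+1}. e (n - 1) i a2 \<noteq> 0} = 1"
      using assms(1) ne unfolding split_data_def by auto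
    moreover have "{i\<in>{1..n+1}. e (n - 1) i a2 \<noteq> 0} = {r2', r2}" "r2' < r2"
      using assms(2) unfolding split_data_def by auto
    ultimately show False by simp
  qed
  then have "{r1', r1} = {r2', r2}" "r1' < r1" "r2' < r2"
    using assms unfolding split_data_def by auto
  then show ?thesis by (metis doubleton_eq_iff less_asym)
qed

lemma r_seq_Suc:
  assumes "bratteli_shape A" "minimal_reduction A e"
  shows "\<exists>r' a. split_data e (Suc m) r' (r_seq e (Suc m)) a"
proof -
  obtain r' r a where d: "split_data e (Suc m) r' r a" using split_exists[OF assms] by blast
  have "(THE r. \<exists>r' a. split_data e (Suc m) r' r a) = r"
    by (rule the_equality) (use d split_unique in blast)+
  then show ?thesis using d unfolding r_seq_def by auto
qed

lemma path_step:
  assumes "x \<in> Xmin e"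
  shows "e m (x (Suc m)) (x m) \<noteq> 0" "1 \<le> x (Suc m)" "x (Suc m) \<le> Suc m + 1"
  using assms unfolding Xmin_def by auto

lemma main_ind:
  assumes sh: "bratteli_shape A" and mr: "minimal_reduction A e"
  shows "\<forall>i\<in>{1..n+1}. inV e n (indicator (Bset e i n))"
proof (induction n)
  case 0
  then show ?case using inV_r[of e 0] by (simp add: r_seq_def)
next
  case (Suc m)
  obtain r' a where d: "split_data e (Suc m) r' (r_seq e (Suc m)) a"
    using r_seq_Suc[OF sh mr] by blast
  define r where "r = r_seq e (Suc m)"
  have d2: "1 \<le> r'" "r' < r" "r \<le> Suc m + 1" "1 \<le> a" "a \<le> Suc m"
     "{i\<in>{1..Suc m+1}. e m i a \<noteq> 0} = {r', r}"
     "\<forall>j\<in>{1..Suc m}. j \<noteq> a \<longrightarrow> card {i\<in>{1..Suc m+1}. e m i j \<noteq> 0} = 1"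
    using d unfolding split_data_def r_def by auto
  show ?case
  proof
    fix i assume i: "i \<in> {1..Suc m + 1}"
    then obtain j where j: "j \<in> {1..m+1}" "e m i j \<noteq> 0" using parent_exists[OF mr, of i m] by auto
    show "inV e (Suc m) (indicator (Bset e i (Suc m)))"
    proof (cases "j = a")
      case False
      then have "card {i\<in>{1..Suc m+1}. e m i j \<noteq> 0} = 1" using d2(7) j by auto
      moreover have "i \<in> {i\<in>{1..Suc m+1}. e m i j \<noteq> 0}" using i j by auto
      ultimately have single: "{i\<in>{1..Suc m+1}. e m i j \<noteq> 0} = {i}"
        by (metis card_1_singletonE singletonD)
      have "inV e m (indicator (Bset e j m))" using Suc.IH j by auto
      then have iv: "inV e (Suc m) (indicator (Bset e j m))" by (rule inV_mono)
      show ?thesis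
      proof (rule inV_cong[OF iv])
        fix x assume x: "x \<in> Xmin e"
        have "x (Suc m) = i \<longleftrightarrow> x m = j"
        proof
          assume "x (Suc m) = i"
          then show "x m = j" using path_step[OF x, of m] j parent_unique[OF sh mr] by metis
        next
          assume "x m = j"
          then have "x (Suc m) \<in> {i\<in>{1..Suc m+1}. e m i j \<noteq> 0}" using path_step[OF x, of m] by auto
          then show "x (Suc m) = i" using single by auto
        qed
        then show "indicator (Bset e i (Suc m)) x = (indicator (Bset e j m) x :: complex)"
          using x unfolding Bset_def indicator_def by auto
      qed
    next
      case True
      then have "i \<in> {r', r}" using d2(6) i j by auto
      then show ?thesis
      proof
        assume "i = r'"
        have "inV e m (indicator (Bset e a m))" using Suc.IH d2 by auto
        then have iv1: "inV e (Suc m) (indicator (Bset e a m))" by (rule inV_mono)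
        have iv2: "inV e (Suc m) (\<lambda>x. (-1) * indicator (Bset e r (Suc m)) x)"
          using inV_scale[OF inV_r[of e "Suc m"]] unfolding r_def .
        show ?thesis
        proof (rule inV_cong[OF inV_add[OF iv1 iv2]])
          fix x assume x: "x \<in> Xmin e"
          have "x (Suc m) \<in> {r', r} \<longleftrightarrow> x m = a"
          proof
            assume "x (Suc m) \<in> {r', r}"
            then have "e m (x (Suc m)) a \<noteq> 0" using d2(6) by blast
            then show "x m = a" using path_step[OF x, of m] parent_unique[OF sh mr] by metis
          next
            assume "x m = a"
            then have "x (Suc m) \<in> {i\<in>{1..Suc m+1}. e m i a \<noteq> 0}" using path_step[OF x, of m] by auto
            then show "x (Suc m) \<in> {r', r}" using d2(6) by auto
          qed
          then show "indicator (Bset e i (Suc m)) x = indicator (Bset e a m) x + (-1) * (indicator (Bset e r (Suc m)) x :: complex)"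
            using x d2(2) \<open>i = r'\<close> unfolding Bset_def indicator_def by auto
        qed
      next
        assume "i \<in> {r}"
        then show ?thesis using inV_r[of e "Suc m"] unfolding r_def by simp
      qed
    qed
  qed
qed

theorem lemma4p1:
  fixes A e :: "nat \<Rightarrow> nat \<Rightarrow> nat \<Rightarrow> nat"
  assumes "bratteli_shape A"
    and "minimal_reduction A e"
  shows "\<forall>n\<ge>1. \<forall>\<alpha> :: nat \<Rightarrow> complex. \<exists>\<beta> :: nat \<Rightarrow> complex.
           \<forall>x\<in>Xmin e. R_map e n \<beta> x = (\<Sum>l\<in>{1..n+1}. \<alpha> l * indicator (Bset e l n) x)"
proof (intro allI impI)
  fix n :: nat and \<alpha> :: "nat \<Rightarrow> complex"
  have "inV e n (\<lambda>x. \<Sum>l\<in>{1..n+1}. \<alpha> l * indicator (Bset e l n) x)"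
    by (rule inV_sum) (use inV_scale main_ind[OF assms] in auto)
  then show "\<exists>\<beta> :: nat \<Rightarrow> complex.
           \<forall>x\<in>Xmin e. R_map e n \<beta> x = (\<Sum>l\<in>{1..n+1}. \<alpha> l * indicator (Bset e l n) x)"
    unfolding inV_def by metis
qed

end
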